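(* Let $g_1,g_2$ be monic divisors of $x^m-1$, $h_i=\frac{x^m-1}{g_i}$, $v_1,v_2\in\mathcal{R}$ with $\gcd(v_1v_2-1,x^m-1)=1$, and let $\mathcal{C}$ be the QC code of length $2m$ generated by $(g_1,v_1g_1)$ and $(v_2g_2,g_2)$. (A) Over $\mathbb{F}_q$, $\mathcal{C}$ is Euclidean self-orthogonal iff $h_1\mid\overline{g_1}(1+v_1\overline{v_1})$, $h_1\mid\overline{g_2}(\overline{v_2}+v_1)$ and $h_2\mid\overline{g_2}(1+v_2\overline{v_2})$. (B) Over $\mathbb{F}_{q^2}$, $\mathcal{C}$ is Hermitian self-orthogonal iff $h_1^{[q]}\mid\overline{g_1}(1+v_1^{[q]}\overline{v_1})$, $h_1^{[q]}\mid\overline{g_2}(\overline{v_2}+v_1^{[q]})$ and $h_2^{[q]}\mid\overline{g_2}(v_2^{[q]}\overline{v_2}+1)$. (C) Over $\mathbb{F}_q$, $\mathcal{C}$ is symplectic self-orthogonal iff $h_1\mid\overline{g_1}(\overline{v_1}-v_1)$, $h_1\mid\overline{g_2}(1-\overline{v_2}v_1)$ and $h_2\mid\overline{g_2}(v_2-\overline{v_2})$.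
   Context: $q$ is a prime power; $\mathbb{F}$ is $\mathbb{F}_q$ or $\mathbb{F}_{q^2}$ as indicated; $\mathcal{R}=\mathbb{F}[x]/(x^m-1)$ with elements identified with representatives of degree $<m$; $[k]=(k_0,\dots,k_{m-1})$ for $k=\sum k_ix^i$; $\overline{k}(x)=k(x^{-1})\bmod(x^m-1)$; $k^{[q]}=\sum k_i^qx^i$. For $h\mid x^m-1$, "$h\mid a$" for $a\in\mathcal{R}$ means $h$ divides the representative of $a$. The QC code generated by $(u_{i1},u_{i2})$, $i=1,2$, is $\{([r_1u_{11}+r_2u_{21}],[r_1u_{12}+r_2u_{22}]):r_1,r_2\in\mathcal{R}\}\subseteq\mathbb{F}^{2m}$. Inner products: Euclidean $\sum u_iv_i$; Hermitian $\sum u_i^qv_i$ (over $\mathbb{F}_{q^2}$); symplectic on $\mathbb{F}^{2m}$: $\sum_{i=1}^m(u_iv_{m+i}-u_{m+i}v_i)$. Self-orthogonal means $\mathcal{C}\subseteq\mathcal{C}^\perp$. *)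

theory Defs
  imports "HOL-Computational_Algebra.Polynomial_Factorial"
begin

text \<open>The modulus x^m - 1; elements of R = F[x]/(x^m-1) are represented by
  polynomials of degree < m.\<close>
definition xm1 :: "nat \<Rightarrow> 'a::comm_ring_1 poly" where
  "xm1 m = monom 1 m - 1"

definition cvec :: "nat \<Rightarrow> 'a::field poly \<Rightarrow> 'a list" where
  "cvec m k = map (coeff (k mod xm1 m)) [0..<m]"

text \<open>kbar(x) = k(x^{-1}) mod (x^m - 1).\<close>
definition rbar :: "nat \<Rightarrow> 'a::field poly \<Rightarrow> 'a poly" where
  "rbar m k = (\<Sum>i<m. monom (coeff (k mod xm1 m) i) ((m - i) mod m))"

definition qpow :: "nat \<Rightarrow> 'a::field poly \<Rightarrow> 'a poly" where
  "qpow q k = map_poly (\<lambda>c. c ^ q) k"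

definition rdvd :: "nat \<Rightarrow> 'a::field poly \<Rightarrow> 'a poly \<Rightarrow> bool" where
  "rdvd m h a \<longleftrightarrow> h dvd (a mod xm1 m)"

definition qc_code :: "nat \<Rightarrow> 'a::field poly \<Rightarrow> 'a poly \<Rightarrow> 'a poly \<Rightarrow> 'a poly \<Rightarrow> 'a list set" where
  "qc_code m u11 u12 u21 u22 =
     {cvec m (r1 * u11 + r2 * u21) @ cvec m (r1 * u12 + r2 * u22) | r1 r2.
        degree r1 < m \<and> degree r2 < m}"

definition euclid_ip :: "'a::comm_ring_1 list \<Rightarrow> 'a list \<Rightarrow> 'a" where
  "euclid_ip u v = (\<Sum>i<length u. u ! i * v ! i)"

definition herm_ip :: "nat \<Rightarrow> 'a::comm_ring_1 list \<Rightarrow> 'a list \<Rightarrow> 'a" where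
  "herm_ip q u v = (\<Sum>i<length u. (u ! i) ^ q * v ! i)"

definition sympl_ip :: "nat \<Rightarrow> 'a::comm_ring_1 list \<Rightarrow> 'a list \<Rightarrow> 'a" where
  "sympl_ip m u v = (\<Sum>i<m. u ! i * v ! (m + i) - u ! (m + i) * v ! i)"

definition dual_code :: "nat \<Rightarrow> ('a list \<Rightarrow> 'a list \<Rightarrow> 'a::zero) \<Rightarrow> 'a list set \<Rightarrow> 'a list set" where
  "dual_code n B C = {v. length v = n \<and> (\<forall>u\<in>C. B u v = 0)}"

definition self_orth :: "nat \<Rightarrow> ('a list \<Rightarrow> 'a list \<Rightarrow> 'a::zero) \<Rightarrow> 'a list set \<Rightarrow> bool" where
  "self_orth n B C \<longleftrightarrow> C \<subseteq> dual_code n B C"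

end

theory Submission
  imports Defs "HOL-Algebra.Sylow"
begin


lemma ff_prime_factor_char:
  fixes r :: nat
  assumes fin: "finite (UNIV :: 'b::field set)" and r: "prime r" and rd: "r dvd card (UNIV :: 'b set)"
  shows "r = CHAR('b)"
proof -
  define G where "G = \<lparr> carrier = (UNIV :: 'b set), monoid.mult = (+), one = (0 :: 'b) \<rparr>"
  interpret group G
  proof (rule groupI)
    fix x assume x: "x \<in> carrier G"
    show "\<exists>y\<in>carrier G. y \<otimes>\<^bsub>G\<^esub> x = \<one>\<^bsub>G\<^esub>"
      by (intro bexI[of _ "-x"]) (auto simp: G_def)
  qed (auto simp: G_def add_ac)
  have ord: "order G = r ^ 1 * (card (UNIV :: 'b set) div r)"
    using rd by (simp add: order_def G_def)
  obtain H where H: "subgroup H G" "card H = r ^ 1"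
    using sylow_thm[OF r group_axioms ord] fin by (auto simp: G_def)
  have Hadd: "x + y \<in> H" if "x \<in> H" "y \<in> H" for x y
    using subgroup.m_closed[OF H(1) that] by (simp add: G_def)
  have finH: "finite H" using fin by (rule finite_subset[rotated]) auto
  have rx: "of_nat r * x = 0" if x: "x \<in> H" for x
  proof -
    have "(\<lambda>y. x + y) ` H \<subseteq> H" using Hadd x by auto
    moreover have "card ((\<lambda>y. x + y) ` H) = card H"
      by (rule card_image) (auto simp: inj_on_def)
    ultimately have img: "(\<lambda>y. x + y) ` H = H"
      using finH by (meson card_subset_eq)
    have "(\<Sum>y\<in>H. x + y) = (\<Sum>y\<in>H. y)"
      by (subst img[symmetric], subst sum.reindex) (auto simp: inj_on_def)
    hence "of_nat (card H) * x + (\<Sum>y\<in>H. y) = (\<Sum>y\<in>H. y)"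
      by (simp add: sum.distrib)
    thus ?thesis using H(2) by simp
  qed
  have "card H \<ge> 2" using H(2) r prime_ge_2_nat by auto
  then obtain x where x: "x \<in> H" "x \<noteq> 0"
    by (metis card_le_Suc0_iff_eq finH not_less_eq_eq numeral_2_eq_2)
  have "of_nat r = (0::'b)" using rx[OF x(1)] x(2) by simp
  hence "CHAR('b) dvd r" by (simp add: of_nat_eq_0_iff_char_dvd)
  moreover have "CHAR('b) \<noteq> 1" by simp
  ultimately show ?thesis using r by (metis prime_nat_iff)
qed

lemma ff_CHAR_prime:
  assumes fin: "finite (UNIV :: 'b::field set)"
  shows "prime CHAR('b)"
  using prime_CHAR_semidom finite_imp_CHAR_pos[OF fin] by blast

lemma ff_q_power:
  fixes q :: nat
  assumes fin: "finite (UNIV :: 'b::field set)" and cq: "card (UNIV :: 'b set) = q ^ 2"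
  shows "\<exists>j. q = CHAR('b) ^ j"
proof -
  define p where "p = CHAR('b)"
  have p: "prime p" using ff_CHAR_prime[OF fin] by (simp add: p_def)
  have q0: "q \<noteq> 0" using cq fin by (metis card_0_eq power_eq_0_iff UNIV_not_empty zero_power2)
  have pf: "r = p" if "prime r" "r dvd q" for r
  proof -
    have "r dvd card (UNIV :: 'b set)" using that cq by (simp add: power2_eq_square)
    thus ?thesis using ff_prime_factor_char[OF fin that(1)] by (simp add: p_def)
  qed
  obtain n' where n': "q = p ^ multiplicity p q * n'" "\<not> p dvd n'"
    using multiplicity_decompose'[of q p] q0 p by (metis not_prime_unit)
  have "n' = 1"
  proof (rule ccontr)
    assume "n' \<noteq> 1"
    then obtain r where r: "prime r" "r dvd n'" using prime_factor_nat by blast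
    hence "r dvd p ^ multiplicity p q * n'" by simp
    hence "r dvd q" using n'(1) by metis
    hence "r = p" using pf r by blast
    thus False using r n' by simp
  qed
  thus ?thesis using n' by (auto simp: p_def)
qed

lemma ff_frob:
  fixes q :: nat
  assumes fin: "finite (UNIV :: 'b::field set)" and cq: "card (UNIV :: 'b set) = q ^ 2"
  shows "\<And>x y::'b. (x + y) ^ q = x ^ q + y ^ q"
proof -
  fix x y :: 'b
  obtain j where "q = CHAR('b) ^ j" using ff_q_power[OF fin cq] by blast
  thus "(x + y) ^ q = x ^ q + y ^ q" using freshmans_dream'[OF ff_CHAR_prime[OF fin]] by blast
qed

lemma ff_power_card:
  fixes x :: "'a :: field"
  assumes fin: "finite (UNIV :: 'a set)"
  shows   "x ^ card (UNIV :: 'a set) = x"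
proof (cases "x = 0")
  case False
  have "x * (\<Prod>y\<in>UNIV-{0}. x * y) = x * x ^ (card (UNIV :: 'a set) - 1) * \<Prod>(UNIV-{0})"
    using fin by (simp add: prod.distrib mult_ac)
  also have "x * x ^ (card (UNIV :: 'a set) - 1) = x ^ Suc (card (UNIV :: 'a set) - 1)"
    by (subst power_Suc) auto
  also have "Suc (card (UNIV :: 'a set) - 1) = card (UNIV :: 'a set)"
    using fin by (simp add: Suc_diff_1 finite_UNIV_card_ge_0)
  also have "(\<Prod>y\<in>UNIV-{0}. x * y) = (\<Prod>y\<in>UNIV-{0}. y)"
    by (rule prod.reindex_bij_witness[of _ "\<lambda>y. y / x" "\<lambda>y. x * y"]) (use False in auto)
  finally show ?thesis
    using fin by simp
qed (use fin finite_UNIV_card_ge_0[where ?'a = 'a] in auto)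



lemma xm1_coeff: "coeff (xm1 m :: 'a::comm_ring_1 poly) i = (if i = m then 1 else 0) - (if i = 0 then 1 else 0)"
  by (simp add: xm1_def coeff_monom)

lemma degree_xm1: "0 < m \<Longrightarrow> degree (xm1 m :: 'a::comm_ring_1 poly) = m"
proof -
  assume m: "0 < m"
  have "monom 1 m - (1::'a poly) = monom 1 m + (- 1)" by simp
  also have "degree \<dots> = m" using m by (subst degree_add_eq_left) (auto simp: degree_monom_eq)
  finally show ?thesis by (simp add: xm1_def)
qed

lemma xm1_nz: "0 < m \<Longrightarrow> (xm1 m :: 'a::comm_ring_1 poly) \<noteq> 0"
  using degree_xm1[of m, where 'a='a] by auto

lemma mod_red: "0 < m \<Longrightarrow> degree (p :: 'a::field poly) < m \<Longrightarrow> p mod xm1 m = p"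
  by (rule mod_poly_less) (simp add: degree_xm1)

lemma degree_mod_xm1: "0 < m \<Longrightarrow> degree ((p :: 'a::field poly) mod xm1 m) < m"
  using degree_mod_less[of "xm1 m" p] xm1_nz[of m, where 'a='a] degree_xm1[of m, where 'a='a] by (cases "p mod xm1 m = 0") auto

lemma xm1_dvd_pow: "(xm1 m :: 'a::comm_ring_1 poly) dvd monom 1 (m * t) - 1"
proof -
  have "monom (1::'a) (m * t) = (monom 1 m) ^ t" by (simp add: monom_power mult.commute)
  hence "monom (1::'a) (m * t) - 1 = (monom 1 m - 1) * (\<Sum>i<t. 1 ^ (t - Suc i) * monom 1 m ^ i)"
    using power_diff_sumr2[of "monom (1::'a) m" t 1] by simp
  thus ?thesis unfolding xm1_def by simp
qed

lemma xm1_dvd_monom_aux: "(xm1 m :: 'a::comm_ring_1 poly) dvd monom c (k + m * t) - monom c k"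
proof -
  have "monom c (k + m * t) - monom c k = monom c k * (monom 1 (m * t) - 1)"
    by (simp add: mult_monom algebra_simps)
  thus ?thesis using xm1_dvd_pow[of m t] by (metis dvd_mult)
qed

lemma xm1_dvd_monom:
  assumes "j mod m = k mod m"
  shows "(xm1 m :: 'a::comm_ring_1 poly) dvd monom c j - monom c k"
proof (cases "k \<le> j")
  case True
  then obtain t where "j = k + m * t"
    using assms by (metis le_add_diff_inverse mod_eq_dvd_iff_nat dvdE)
  thus ?thesis using xm1_dvd_monom_aux by blast
next
  case False
  then obtain t where "k = j + m * t"
    using assms by (metis le_add_diff_inverse nat_le_linear mod_eq_dvd_iff_nat dvdE)
  hence "xm1 m dvd monom c k - monom c j" using xm1_dvd_monom_aux by blast
  thus ?thesis by (metis dvd_minus_iff minus_diff_eq)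
qed

lemma monom_mod: "0 < m \<Longrightarrow> monom (c::'a::field) e mod xm1 m = monom c (e mod m)"
proof -
  assume m: "0 < m"
  have "monom c e mod xm1 m = monom c (e mod m) mod xm1 m"
    by (subst mod_eq_dvd_iff) (rule xm1_dvd_monom, simp)
  also have "\<dots> = monom c (e mod m)"
    using m by (intro mod_red) (auto simp: degree_monom_le intro: le_less_trans[OF degree_monom_le])
  finally show ?thesis .
qed

lemma sum_mod_poly: "(\<Sum>x\<in>S. g x) mod (n :: 'a::field poly) = (\<Sum>x\<in>S. g x mod n)"
  by (induction S rule: infinite_finite_induct) (auto simp: poly_mod_add_left)

lemma sum_monom_mod: "0 < m \<Longrightarrow> (\<Sum>x\<in>S. monom (c x :: 'a::field) (e x)) mod xm1 m = (\<Sum>x\<in>S. monom (c x) (e x mod m))"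
  by (simp add: sum_mod_poly monom_mod)

lemma red_as_sum: "0 < m \<Longrightarrow> (p :: 'a::field poly) mod xm1 m = (\<Sum>i<m. monom (coeff (p mod xm1 m) i) i)"
proof -
  assume m: "0 < m"
  have "degree (p mod xm1 m) \<le> m - 1" using degree_mod_xm1[OF m, of p] by simp
  hence "(\<Sum>i\<le>m - 1. monom (coeff (p mod xm1 m) i) i) = p mod xm1 m"
    by (rule poly_as_sum_of_monoms')
  moreover have "{..m - 1} = {..<m}" using m by auto
  ultimately show ?thesis by simp
qed



definition fhom :: "('a::field \<Rightarrow> 'a) \<Rightarrow> bool" where
  "fhom f \<longleftrightarrow> f 0 = 0 \<and> f 1 = 1 \<and> (\<forall>x y. f (x + y) = f x + f y) \<and> (\<forall>x y. f (x * y) = f x * f y)"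

lemma fhom_id: "fhom (\<lambda>x. x)" by (simp add: fhom_def)

lemma fhomD: assumes "fhom f"
  shows "f 0 = 0" "f 1 = 1" "f (x + y) = f x + f y" "f (x * y) = f x * f y"
    "f (- x) = - f x" "f (x - y) = f x - f y"
proof -
  show f0: "f 0 = 0" and "f 1 = 1" and fa: "\<And>x y. f (x + y) = f x + f y" and "f (x * y) = f x * f y"
    using assms by (auto simp: fhom_def)
  have "f (- x) + f x = 0" using fa[of "-x" x] f0 by simp
  thus fn: "f (- x) = - f x" by (simp add: eq_neg_iff_add_eq_0)
  have "f (-y) + f y = 0" using fa[of "-y" y] f0 by simp
  hence "f (- y) = - f y" by (simp add: eq_neg_iff_add_eq_0)
  thus "f (x - y) = f x - f y" using fa[of x "-y"] by simp
qed

lemma fhom_sum: "fhom f \<Longrightarrow> f (\<Sum>x\<in>S. g x) = (\<Sum>x\<in>S. f (g x))"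
  by (induction S rule: infinite_finite_induct) (auto simp: fhomD)

lemma map_poly_add_h: "fhom f \<Longrightarrow> map_poly f (p + q) = map_poly f p + map_poly f q"
  by (rule poly_eqI) (simp add: coeff_map_poly fhomD)

lemma map_poly_diff_h: "fhom f \<Longrightarrow> map_poly f (p - q) = map_poly f p - map_poly f q"
  by (rule poly_eqI) (simp add: coeff_map_poly fhomD)

lemma map_poly_mult_h: "fhom f \<Longrightarrow> map_poly f (p * q) = map_poly f p * map_poly f q"
  by (rule poly_eqI) (simp add: coeff_map_poly fhomD coeff_mult fhom_sum)

lemma map_poly_sum_h: "fhom f \<Longrightarrow> map_poly f (\<Sum>x\<in>S. g x) = (\<Sum>x\<in>S. map_poly f (g x))"
  by (induction S rule: infinite_finite_induct) (auto simp: fhomD map_poly_add_h)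

lemma map_poly_xm1: "fhom f \<Longrightarrow> map_poly f (xm1 m) = xm1 m"
  unfolding xm1_def by (simp add: map_poly_diff_h map_poly_monom fhomD)

lemma map_poly_one_h: "fhom f \<Longrightarrow> map_poly f 1 = 1"
  by (simp add: fhomD)

lemma map_poly_mod: assumes f: "fhom f" and m: "0 < m"
  shows "map_poly f A mod xm1 m = map_poly f (A mod xm1 m)"
proof -
  have "A = A div xm1 m * xm1 m + A mod xm1 m" by simp
  hence "map_poly f A = map_poly f (A div xm1 m) * xm1 m + map_poly f (A mod xm1 m)"
    by (metis f map_poly_add_h map_poly_mult_h map_poly_xm1)
  hence "map_poly f A mod xm1 m = map_poly f (A mod xm1 m) mod xm1 m"
    by simp
  also have "\<dots> = map_poly f (A mod xm1 m)"
    using m by (intro mod_red) (auto intro: le_less_trans[OF map_poly_degree_leq] degree_mod_xm1)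
  finally show ?thesis .
qed



lemma pc_X_pow: "pcompose ([:0, 1:] ^ i) r = (r :: 'a::comm_ring_1 poly) ^ i"
  by (induction i) (simp_all add: pcompose_mult pcompose_pCons pcompose_1)

lemma pc_monom: "pcompose (monom c i) (r :: 'a::comm_ring_1 poly) = smult c (r ^ i)"
  by (simp add: monom_altdef pcompose_smult pc_X_pow)

lemma monom_cong: "j mod m = k mod m \<Longrightarrow> monom (c::'a::field) j mod xm1 m = monom c k mod xm1 m"
  by (subst mod_eq_dvd_iff) (rule xm1_dvd_monom)

lemma pc_cong:
  assumes "A mod xm1 m = B mod xm1 m"
  shows "pcompose A (monom 1 e) mod xm1 m = pcompose B (monom (1::'a::field) e) mod xm1 m"
proof -
  from assms obtain K where K: "A - B = xm1 m * K" by (auto simp: mod_eq_dvd_iff)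
  have "pcompose (A - B) (monom 1 e) = pcompose (xm1 m) (monom 1 e) * pcompose K (monom 1 e)"
    by (simp add: K pcompose_mult)
  moreover have "pcompose (xm1 m) (monom (1::'a) e) = monom 1 (m * e) - 1"
    by (simp add: xm1_def pcompose_diff pc_monom monom_power mult.commute pcompose_1)
  moreover have "xm1 m dvd (monom (1::'a) (m * e) - 1)" by (rule xm1_dvd_pow)
  ultimately have "xm1 m dvd pcompose (A - B) (monom 1 e)" by simp
  thus ?thesis by (simp add: mod_eq_dvd_iff pcompose_diff)
qed

lemma pc_r_cong:
  assumes "r mod xm1 m = r' mod xm1 m"
  shows "pcompose A r mod xm1 m = pcompose A (r' :: 'a::field poly) mod xm1 m"
proof (induction A rule: pCons_induct)
  case (pCons a p)
  have "pcompose (pCons a p) r mod xm1 m = ([:a:] + r * pcompose p r) mod xm1 m"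
    by (simp add: pcompose_pCons)
  also have "\<dots> = ([:a:] + (r mod xm1 m) * (pcompose p r mod xm1 m)) mod xm1 m"
    by (metis mod_add_right_eq mod_mult_eq)
  also have "\<dots> = ([:a:] + (r' mod xm1 m) * (pcompose p r' mod xm1 m)) mod xm1 m"
    using pCons.IH assms by simp
  also have "\<dots> = pcompose (pCons a p) r' mod xm1 m"
    by (metis mod_add_right_eq mod_mult_eq pcompose_pCons)
  finally show ?case .
qed simp

lemma exp_aux: "i < m \<Longrightarrow> ((m - 1) * i) mod m = (m - i) mod (m::nat)"
proof (cases i)
  case 0 thus ?thesis by simp
next
  case (Suc i')
  assume "i < m"
  then obtain m' where m': "m = Suc m'" by (cases m) auto
  have "(m - 1) * i = m * i' + (m - i)" using Suc m' \<open>i < m\<close> by simp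
  thus ?thesis by simp
qed

lemma exp_aux2: "0 < m \<Longrightarrow> ((m - 1) * (m - 1)) mod m = 1 mod (m::nat)"
proof -
  assume m: "0 < m"
  show ?thesis
  proof (cases "m = 1")
    case True thus ?thesis by simp
  next
    case False
    then obtain k where k: "m = Suc (Suc k)" using m by (metis One_nat_def gr0_implies_Suc not0_implies_Suc)
    have "(m - 1) * (m - 1) = m * k + 1" using k by simp
    moreover have "(m * k + 1) mod m = 1" using \<open>0 < m\<close> \<open>m \<noteq> 1\<close>
      by (metis less_one mod_less mod_mult_self4 nat_neq_iff)
    ultimately show ?thesis using k by simp
  qed
qed

definition pc :: "nat \<Rightarrow> 'a::field poly \<Rightarrow> 'a poly" where
  "pc m a = pcompose a (monom 1 (m - 1))"

lemma rbar_eq: assumes m: "0 < m" shows "rbar m a = pc m a mod xm1 m"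
proof -
  define c where "c i = coeff (a mod xm1 m) i" for i
  have "pc m a mod xm1 m = pc m (a mod xm1 m) mod xm1 m"
    unfolding pc_def by (rule pc_cong) simp
  also have "pc m (a mod xm1 m) = (\<Sum>i<m. monom (c i) ((m - 1) * i))"
    unfolding pc_def
    by (subst red_as_sum[OF m]) (simp add: pcompose_sum pc_monom monom_power smult_monom c_def mult.commute)
  also have "\<dots> mod xm1 m = (\<Sum>i<m. monom (c i) (((m - 1) * i) mod m))"
    by (rule sum_monom_mod[OF m])
  also have "\<dots> = (\<Sum>i<m. monom (c i) ((m - i) mod m))"
    by (rule sum.cong) (use exp_aux[of _ m] in auto)
  finally show ?thesis by (simp add: rbar_def c_def)
qed

lemma rbar_mod: "rbar m (a mod xm1 m) = rbar m a"
  by (simp add: rbar_def)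

lemma rbar_red: "0 < m \<Longrightarrow> rbar m a mod xm1 m = rbar m a"
  by (simp add: rbar_eq)

lemma rbar_add: "0 < m \<Longrightarrow> rbar m (a + b) = rbar m a + rbar m b"
  by (simp add: rbar_eq pc_def pcompose_add poly_mod_add_left)

lemma rbar_diff: "0 < m \<Longrightarrow> rbar m (a - b) = rbar m a - rbar m b"
  by (simp add: rbar_eq pc_def pcompose_diff poly_mod_diff_left)

lemma rbar_mult: "0 < m \<Longrightarrow> rbar m (a * b) = (rbar m a * rbar m b) mod xm1 m"
  by (simp add: rbar_eq pc_def pcompose_mult mod_mult_eq)

lemma rbar_zero: "rbar m 0 = 0"
  by (simp add: rbar_def)

lemma rbar_one: "0 < m \<Longrightarrow> rbar m 1 = 1"
  by (simp add: rbar_eq pc_def mod_red pcompose_1)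

lemma rbar_rbar: assumes m: "0 < m" shows "rbar m (rbar m a) = a mod xm1 m"
proof -
  have "rbar m (rbar m a) = pc m (pc m a mod xm1 m) mod xm1 m"
    using m by (simp add: rbar_eq)
  also have "\<dots> = pc m (pc m a) mod xm1 m"
    unfolding pc_def by (rule pc_cong) simp
  also have "pc m (pc m a) = pcompose a (monom 1 ((m - 1) * (m - 1)))"
    by (simp add: pc_def pcompose_assoc[symmetric] pc_monom monom_power)
  also have "\<dots> mod xm1 m = pcompose a (monom 1 1) mod xm1 m"
    by (rule pc_r_cong, rule monom_cong) (use exp_aux2[OF m] in simp)
  also have "monom (1::'a) 1 = [:0, 1:]" by (simp add: monom_Suc)
  finally show ?thesis by simp
qed

lemma rbar_map: assumes f: "fhom f" and m: "0 < m"
  shows "rbar m (map_poly f a) = map_poly f (rbar m a)"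
  unfolding rbar_def
  by (simp add: map_poly_sum_h[OF f] map_poly_monom fhomD[OF f] map_poly_mod[OF f m] coeff_map_poly)



lemma idx: "i < m \<Longrightarrow> j < m \<Longrightarrow> ((i + (m - j) mod m) mod m = 0) = (j = (i::nat))"
proof (cases "j = 0")
  case True
  assume "i < m" "j < m" thus ?thesis using True by auto
next
  case False
  assume a: "i < m" "j < m"
  hence "(m - j) mod m = m - j" using False by simp
  moreover have "(i + (m - j)) mod m = 0 \<longleftrightarrow> j = i"
  proof (cases "j \<le> i")
    case True
    hence e: "i + (m - j) = (i - j) + m" using a by simp
    have "(i - j + m) mod m = (i - j)" using a by simp
    thus ?thesis using e True by auto
  next
    case False
    hence l: "i + (m - j) < m" "0 < i + (m - j)" using a by auto
    hence "(i + (m - j)) mod m = i + (m - j)" by simp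
    thus ?thesis using False l(2) by auto
  qed
  ultimately show ?thesis by simp
qed

lemma L1:
  assumes f: "fhom f" and m: "0 < m"
  shows "(\<Sum>i<m. f (coeff (A mod xm1 m) i) * coeff (B mod xm1 m) i)
         = coeff ((map_poly f A * rbar m B) mod xm1 m) 0"
proof -
  define a where "a i = coeff (A mod xm1 m) i" for i
  define b where "b i = coeff (B mod xm1 m) i" for i
  have e1: "(map_poly f A * rbar m B) mod xm1 m = (map_poly f (A mod xm1 m) * rbar m B) mod xm1 m"
    by (metis map_poly_mod[OF f m] mod_mult_left_eq)
  have e2: "map_poly f (A mod xm1 m) = (\<Sum>i<m. monom (f (a i)) i)"
    by (subst red_as_sum[OF m]) (simp add: map_poly_sum_h[OF f] map_poly_monom fhomD[OF f] a_def)
  have e3: "rbar m B = (\<Sum>j<m. monom (b j) ((m - j) mod m))"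
    by (simp add: rbar_def b_def)
  have e4: "(\<Sum>i<m. monom (f (a i)) i) * (\<Sum>j<m. monom (b j) ((m - j) mod m))
      = (\<Sum>i<m. \<Sum>j<m. monom (f (a i) * b j) (i + (m - j) mod m))"
    by (simp add: sum_product mult_monom)
  have e5: "(\<Sum>i<m. \<Sum>j<m. monom (f (a i) * b j) (i + (m - j) mod m)) mod xm1 m
      = (\<Sum>i<m. \<Sum>j<m. monom (f (a i) * b j) ((i + (m - j) mod m) mod m))"
    by (simp add: sum_mod_poly monom_mod[OF m])
  have "coeff ((map_poly f A * rbar m B) mod xm1 m) 0
     = (\<Sum>i<m. \<Sum>j<m. if (i + (m - j) mod m) mod m = 0 then f (a i) * b j else 0)"
    unfolding e1 unfolding e2 unfolding e3 unfolding e4 unfolding e5 by (simp add: coeff_sum coeff_monom)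
  also have "\<dots> = (\<Sum>i<m. \<Sum>j<m. if j = i then f (a i) * b j else 0)"
    by (intro sum.cong refl) (simp add: idx)
  also have "\<dots> = (\<Sum>i<m. f (a i) * b i)"
    by simp
  finally show ?thesis by (simp add: a_def b_def)
qed

lemma Kcoeff:
  assumes m: "0 < m" and k: "k < m"
  shows "coeff ((P * rbar m (monom 1 k)) mod xm1 m) 0 = coeff ((P :: 'a::field poly) mod xm1 m) k"
proof -
  have "coeff ((P * rbar m (monom 1 k)) mod xm1 m) 0
      = (\<Sum>i<m. coeff (P mod xm1 m) i * coeff (monom 1 k mod xm1 m) i)"
    using L1[OF fhom_id m, of P "monom 1 k"] by simp
  also have "monom (1::'a) k mod xm1 m = monom 1 k"
    using m k by (simp add: monom_mod)
  also have "(\<Sum>i<m. coeff (P mod xm1 m) i * coeff (monom (1::'a) k) i)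
      = (\<Sum>i<m. if k = i then coeff (P mod xm1 m) i else 0)"
    by (rule sum.cong) (auto simp: coeff_monom)
  also have "\<dots> = coeff (P mod xm1 m) k"
    using k by simp
  finally show ?thesis .
qed

lemma red_zeroI:
  assumes m: "0 < m" and z: "\<And>k. k < m \<Longrightarrow> coeff ((P :: 'a::field poly) mod xm1 m) k = 0"
  shows "P mod xm1 m = 0"
proof (rule poly_eqI)
  fix n show "coeff (P mod xm1 m) n = coeff 0 n"
  proof (cases "n < m")
    case True thus ?thesis using z by simp
  next
    case False
    hence "degree (P mod xm1 m) < n" using degree_mod_xm1[OF m, of P] by simp
    thus ?thesis by (simp add: coeff_eq_0)
  qed
qed

lemma length_cvec [simp]: "length (cvec m a) = m"
  by (simp add: cvec_def)



lemma gen: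
  fixes B :: "'a::field list \<Rightarrow> 'a list \<Rightarrow> 'a"
    and PP :: "'a poly \<Rightarrow> 'a poly \<Rightarrow> 'a poly \<Rightarrow> 'a poly \<Rightarrow> 'a poly"
    and T :: "'a poly \<Rightarrow> 'a poly"
  assumes m: "0 < m"
  and hB: "\<And>A1 A2 B1 B2. B (cvec m A1 @ cvec m A2) (cvec m B1 @ cvec m B2) = coeff (PP A1 A2 B1 B2 mod xm1 m) 0"
  and hexp: "\<And>r1 r2 s1 s2. PP (r1*g11 + r2*g21) (r1*g12 + r2*g22) (s1*g11 + s2*g21) (s1*g12 + s2*g22) mod xm1 m
     = (T r1 * rbar m s1 * PP g11 g12 g11 g12 + T r1 * rbar m s2 * PP g11 g12 g21 g22
        + T r2 * rbar m s1 * PP g21 g22 g11 g12 + T r2 * rbar m s2 * PP g21 g22 g21 g22) mod xm1 m"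
  and T1: "T 1 = 1" and T0: "T 0 = 0"
  shows "self_orth (2*m) B (qc_code m g11 g12 g21 g22) \<longleftrightarrow>
    (PP g11 g12 g11 g12 mod xm1 m = 0 \<and> PP g11 g12 g21 g22 mod xm1 m = 0 \<and>
     PP g21 g22 g11 g12 mod xm1 m = 0 \<and> PP g21 g22 g21 g22 mod xm1 m = 0)"
proof -
  define Q where "Q r1 r2 s1 s2 = T r1 * rbar m s1 * PP g11 g12 g11 g12 + T r1 * rbar m s2 * PP g11 g12 g21 g22
        + T r2 * rbar m s1 * PP g21 g22 g11 g12 + T r2 * rbar m s2 * PP g21 g22 g21 g22" for r1 r2 s1 s2
  define cw where "cw r1 r2 = cvec m (r1*g11 + r2*g21) @ cvec m (r1*g12 + r2*g22)" for r1 r2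
  have eq: "B (cw r1 r2) (cw s1 s2) = coeff (Q r1 r2 s1 s2 mod xm1 m) 0" for r1 r2 s1 s2
    unfolding cw_def hB hexp Q_def ..
  have mem: "cw r1 r2 \<in> qc_code m g11 g12 g21 g22" if "degree r1 < m" "degree r2 < m" for r1 r2
    unfolding cw_def qc_code_def using that by blast
  have memE: "\<exists>r1 r2. degree r1 < m \<and> degree r2 < m \<and> v = cw r1 r2"
    if "v \<in> qc_code m g11 g12 g21 g22" for v
    using that unfolding cw_def qc_code_def by blast
  have len: "length (cw r1 r2) = 2 * m" for r1 r2 by (simp add: cw_def)
  show ?thesis
  proof
    assume so: "self_orth (2*m) B (qc_code m g11 g12 g21 g22)"
    have Z: "coeff (Q r1 r2 s1 s2 mod xm1 m) 0 = 0"
      if "degree r1 < m" "degree r2 < m" "degree s1 < m" "degree s2 < m" for r1 r2 s1 s2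
    proof -
      have "cw s1 s2 \<in> dual_code (2*m) B (qc_code m g11 g12 g21 g22)"
        using so mem[OF that(3,4)] unfolding self_orth_def by blast
      hence "B (cw r1 r2) (cw s1 s2) = 0"
        using mem[OF that(1,2)] unfolding dual_code_def by blast
      thus ?thesis by (simp add: eq)
    qed
    have d1: "degree (1::'a poly) < m" "degree (0::'a poly) < m" using m by auto
    have dk: "degree (monom (1::'a) k) < m" if "k < m" for k using that by (simp add: degree_monom_eq)
    have R: "P mod xm1 m = 0" if h: "\<And>k. k < m \<Longrightarrow> coeff ((rbar m (monom 1 k) * P) mod xm1 m) 0 = 0" for P
    proof (rule red_zeroI[OF m])
      fix k assume k: "k < m"
      have "coeff ((P * rbar m (monom 1 k)) mod xm1 m) 0 = 0" using h[OF k] by (simp add: mult.commute)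
      thus "coeff (P mod xm1 m) k = 0" using Kcoeff[OF m k, of P] by simp
    qed
    show "PP g11 g12 g11 g12 mod xm1 m = 0 \<and> PP g11 g12 g21 g22 mod xm1 m = 0 \<and>
     PP g21 g22 g11 g12 mod xm1 m = 0 \<and> PP g21 g22 g21 g22 mod xm1 m = 0"
    proof (intro conjI; rule R)
      fix k assume k: "k < m"
      show "coeff ((rbar m (monom 1 k) * PP g11 g12 g11 g12) mod xm1 m) 0 = 0"
        using Z[OF d1(1) d1(2) dk[OF k] d1(2)] by (simp add: Q_def T1 T0 rbar_zero)
      show "coeff ((rbar m (monom 1 k) * PP g11 g12 g21 g22) mod xm1 m) 0 = 0"
        using Z[OF d1(1) d1(2) d1(2) dk[OF k]] by (simp add: Q_def T1 T0 rbar_zero)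
      show "coeff ((rbar m (monom 1 k) * PP g21 g22 g11 g12) mod xm1 m) 0 = 0"
        using Z[OF d1(2) d1(1) dk[OF k] d1(2)] by (simp add: Q_def T1 T0 rbar_zero)
      show "coeff ((rbar m (monom 1 k) * PP g21 g22 g21 g22) mod xm1 m) 0 = 0"
        using Z[OF d1(2) d1(1) d1(2) dk[OF k]] by (simp add: Q_def T1 T0 rbar_zero)
    qed
  next
    assume z: "PP g11 g12 g11 g12 mod xm1 m = 0 \<and> PP g11 g12 g21 g22 mod xm1 m = 0 \<and>
     PP g21 g22 g11 g12 mod xm1 m = 0 \<and> PP g21 g22 g21 g22 mod xm1 m = 0"
    have Qz: "Q r1 r2 s1 s2 mod xm1 m = 0" for r1 r2 s1 s2
    proof -
      have "xm1 m dvd Q r1 r2 s1 s2" using z unfolding Q_def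
        by (intro dvd_add dvd_mult) (auto simp: mod_eq_0_iff_dvd)
      thus ?thesis by (simp add: mod_eq_0_iff_dvd)
    qed
    show "self_orth (2*m) B (qc_code m g11 g12 g21 g22)"
      unfolding self_orth_def dual_code_def
    proof
      fix v assume v: "v \<in> qc_code m g11 g12 g21 g22"
      then obtain s1 s2 where s: "v = cw s1 s2" using memE by blast
      show "v \<in> {v. length v = 2 * m \<and> (\<forall>u\<in>qc_code m g11 g12 g21 g22. B u v = 0)}"
      proof (simp add: s len, intro ballI)
        fix u assume "u \<in> qc_code m g11 g12 g21 g22"
        then obtain r1 r2 where "u = cw r1 r2" using memE by blast
        thus "B u (cw s1 s2) = 0" by (simp add: eq Qz)
      qed
    qed
  qed
qed



definition eqm :: "nat \<Rightarrow> 'a::field poly \<Rightarrow> 'a poly \<Rightarrow> bool" where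
  "eqm m a b \<longleftrightarrow> xm1 m dvd a - b"

lemma eqm_refl: "eqm m a a" by (simp add: eqm_def)
lemma eqm_eq: "a = b \<Longrightarrow> eqm m a b" by (simp add: eqm_def)
lemma eqm_sym: "eqm m a b \<Longrightarrow> eqm m b a"
proof -
  assume "eqm m a b"
  hence "xm1 m dvd - (a - b)" unfolding eqm_def by (simp only: dvd_minus_iff)
  thus ?thesis by (simp add: eqm_def)
qed
lemma eqm_trans [trans]: "eqm m a b \<Longrightarrow> eqm m b c \<Longrightarrow> eqm m a c"
proof -
  assume "eqm m a b" "eqm m b c"
  hence "xm1 m dvd (a - b) + (b - c)" unfolding eqm_def by (rule dvd_add)
  thus ?thesis by (simp add: eqm_def)
qed
lemma eqm_trans2 [trans]: "eqm m a b \<Longrightarrow> b = c \<Longrightarrow> eqm m a c" by simp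
lemma eqm_trans3 [trans]: "a = b \<Longrightarrow> eqm m b c \<Longrightarrow> eqm m a c" by simp
lemma eqm_add: "eqm m a b \<Longrightarrow> eqm m c d \<Longrightarrow> eqm m (a + c) (b + d)"
proof -
  assume "eqm m a b" "eqm m c d"
  hence "xm1 m dvd (a - b) + (c - d)" unfolding eqm_def by (rule dvd_add)
  moreover have "(a - b) + (c - d) = (a + c) - (b + d)" by simp
  ultimately show ?thesis by (simp add: eqm_def)
qed
lemma eqm_diff: "eqm m a b \<Longrightarrow> eqm m c d \<Longrightarrow> eqm m (a - c) (b - d)"
proof -
  assume "eqm m a b" "eqm m c d"
  hence "xm1 m dvd (a - b) - (c - d)" unfolding eqm_def by (rule dvd_diff)
  moreover have "(a - b) - (c - d) = (a - c) - (b - d)" by simp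
  ultimately show ?thesis by (simp add: eqm_def)
qed
lemma eqm_mult: "eqm m a b \<Longrightarrow> eqm m c d \<Longrightarrow> eqm m (a * c) (b * d)"
proof -
  assume "eqm m a b" "eqm m c d"
  hence "xm1 m dvd (a - b) * c + b * (c - d)" unfolding eqm_def by (intro dvd_add dvd_mult2 dvd_mult)
  moreover have "(a - b) * c + b * (c - d) = a * c - b * d" by (simp add: algebra_simps)
  ultimately show ?thesis by (simp add: eqm_def)
qed
lemma eqm_mod_iff: "eqm m a b \<longleftrightarrow> a mod xm1 m = b mod xm1 m"
  by (simp add: eqm_def mod_eq_dvd_iff)
lemma eqm_zero_iff: "eqm m a 0 \<longleftrightarrow> a mod xm1 m = 0"
  by (simp add: eqm_mod_iff)
lemma eqm_mod: "eqm m (a mod xm1 m) a" by (simp add: eqm_mod_iff)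

lemma eqm_rbar_mult: "0 < m \<Longrightarrow> eqm m (rbar m (a * b)) (rbar m a * rbar m b)"
  by (simp add: rbar_mult eqm_mod)
lemma eqm_rbar_rbar: "0 < m \<Longrightarrow> eqm m (rbar m (rbar m a)) a"
  by (simp add: rbar_rbar eqm_mod)
lemma eqm_rbar: "0 < m \<Longrightarrow> eqm m a b \<Longrightarrow> rbar m a = rbar m b"
  by (metis eqm_mod_iff rbar_mod)

lemma divl:
  assumes m: "0 < m" and GH: "xm1 m = G * H" and G: "G \<noteq> 0" and P: "eqm m P (G * Y)"
  shows "P mod xm1 m = 0 \<longleftrightarrow> rdvd m H Y"
proof -
  have "P mod xm1 m = 0 \<longleftrightarrow> (G * Y) mod xm1 m = 0" using P by (simp add: eqm_mod_iff)
  also have "\<dots> \<longleftrightarrow> G * H dvd G * Y" by (simp add: GH mod_eq_0_iff_dvd)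
  also have "\<dots> \<longleftrightarrow> H dvd Y" using G by simp
  also have "\<dots> \<longleftrightarrow> H dvd Y mod xm1 m" using GH by (simp add: dvd_mod_iff)
  finally show ?thesis by (simp add: rdvd_def)
qed

definition gform :: "('a::field \<Rightarrow> 'a) \<Rightarrow> 'a list \<Rightarrow> 'a list \<Rightarrow> 'a" where
  "gform f u v = (\<Sum>i<length u. f (u ! i) * v ! i)"

lemma cvec_nth: "i < m \<Longrightarrow> cvec m a ! i = coeff (a mod xm1 m) i"
  by (simp add: cvec_def)

lemma sum_split2: "(\<Sum>i<m + m. g i) = (\<Sum>i<m. g i) + (\<Sum>i<m. g (m + i :: nat))"
proof -
  have "(\<Sum>i<m + m. g i) = (\<Sum>i\<in>{0..<m}. g i) + (\<Sum>i\<in>{m..<m+m}. g i)"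
    by (subst sum.atLeastLessThan_concat) (auto simp: atLeast0LessThan)
  also have "(\<Sum>i\<in>{m..<m+m}. g i) = (\<Sum>i\<in>{0..<m}. g (i + m))"
    using sum.shift_bounds_nat_ivl[of g 0 m m] by simp
  finally show ?thesis by (simp add: atLeast0LessThan add.commute)
qed

lemma gform_hB:
  assumes f: "fhom f" and m: "0 < m"
  shows "gform f (cvec m A1 @ cvec m A2) (cvec m B1 @ cvec m B2)
    = coeff ((map_poly f A1 * rbar m B1 + map_poly f A2 * rbar m B2) mod xm1 m) 0"
proof -
  have "gform f (cvec m A1 @ cvec m A2) (cvec m B1 @ cvec m B2)
      = (\<Sum>i<m. f (coeff (A1 mod xm1 m) i) * coeff (B1 mod xm1 m) i)
        + (\<Sum>i<m. f (coeff (A2 mod xm1 m) i) * coeff (B2 mod xm1 m) i)"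
    unfolding gform_def by (simp add: sum_split2 nth_append cvec_nth)
  thus ?thesis by (simp add: L1[OF f m] poly_mod_add_left)
qed

lemma sympl_hB:
  assumes m: "0 < m"
  shows "sympl_ip m (cvec m A1 @ cvec m A2) (cvec m B1 @ cvec m B2)
    = coeff ((A1 * rbar m B2 - A2 * rbar m B1) mod xm1 m) 0"
proof -
  have "sympl_ip m (cvec m A1 @ cvec m A2) (cvec m B1 @ cvec m B2)
      = (\<Sum>i<m. coeff (A1 mod xm1 m) i * coeff (B2 mod xm1 m) i)
        - (\<Sum>i<m. coeff (A2 mod xm1 m) i * coeff (B1 mod xm1 m) i)"
    unfolding sympl_ip_def by (simp add: nth_append cvec_nth sum_subtractf)
  thus ?thesis using L1[OF fhom_id m, of A1 B2] L1[OF fhom_id m, of A2 B1]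
    by (simp add: poly_mod_diff_left)
qed



lemma eqm_rbar_lin: "0 < m \<Longrightarrow> eqm m (rbar m (s1 * a + s2 * b)) (rbar m s1 * rbar m a + rbar m s2 * rbar m b)"
  by (simp add: rbar_add eqm_add eqm_rbar_mult)

lemma herm_hexp:
  assumes f: "fhom f" and m: "0 < m"
  shows "(map_poly f (r1*g11 + r2*g21) * rbar m (s1*g11 + s2*g21)
          + map_poly f (r1*g12 + r2*g22) * rbar m (s1*g12 + s2*g22)) mod xm1 m
     = (map_poly f r1 * rbar m s1 * (map_poly f g11 * rbar m g11 + map_poly f g12 * rbar m g12)
        + map_poly f r1 * rbar m s2 * (map_poly f g11 * rbar m g21 + map_poly f g12 * rbar m g22)
        + map_poly f r2 * rbar m s1 * (map_poly f g21 * rbar m g11 + map_poly f g22 * rbar m g12)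
        + map_poly f r2 * rbar m s2 * (map_poly f g21 * rbar m g21 + map_poly f g22 * rbar m g22)) mod xm1 m"
proof -
  let ?T = "map_poly f"
  have "eqm m (?T (r1*g11 + r2*g21) * rbar m (s1*g11 + s2*g21) + ?T (r1*g12 + r2*g22) * rbar m (s1*g12 + s2*g22))
     (?T (r1*g11 + r2*g21) * (rbar m s1 * rbar m g11 + rbar m s2 * rbar m g21)
      + ?T (r1*g12 + r2*g22) * (rbar m s1 * rbar m g12 + rbar m s2 * rbar m g22))"
    by (intro eqm_add eqm_mult eqm_refl eqm_rbar_lin m)
  also have "\<dots> = map_poly f r1 * rbar m s1 * (map_poly f g11 * rbar m g11 + map_poly f g12 * rbar m g12)
        + map_poly f r1 * rbar m s2 * (map_poly f g11 * rbar m g21 + map_poly f g12 * rbar m g22)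
        + map_poly f r2 * rbar m s1 * (map_poly f g21 * rbar m g11 + map_poly f g22 * rbar m g12)
        + map_poly f r2 * rbar m s2 * (map_poly f g21 * rbar m g21 + map_poly f g22 * rbar m g22)"
    by (simp add: map_poly_add_h[OF f] map_poly_mult_h[OF f] algebra_simps)
  finally show ?thesis by (simp add: eqm_mod_iff)
qed

lemma map_poly_invol: assumes f: "fhom f" and ff: "\<And>x. f (f x) = x"
  shows "map_poly f (map_poly f p) = p"
proof -
  have "map_poly f (map_poly f p) = map_poly (f \<circ> f) p"
    using fhomD(1)[OF f] by (intro map_poly_map_poly[of f f])
  also have "\<dots> = p" by (rule map_poly_idI) (simp add: ff)
  finally show ?thesis .
qed

lemma herm_single:
  assumes f: "fhom f" and ff: "\<And>x. f (f x) = x" and m: "0 < m"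
  shows "eqm m (map_poly f b * rbar m a) (rbar m (map_poly f (map_poly f a * rbar m b)))"
proof -
  have "map_poly f (map_poly f a * rbar m b) = a * rbar m (map_poly f b)"
    by (simp add: map_poly_mult_h[OF f] map_poly_invol[OF f ff] rbar_map[OF f m])
  hence "rbar m (map_poly f (map_poly f a * rbar m b)) = rbar m (a * rbar m (map_poly f b))" by simp
  also have "eqm m \<dots> (rbar m a * rbar m (rbar m (map_poly f b)))" by (rule eqm_rbar_mult[OF m])
  also have "eqm m \<dots> (rbar m a * map_poly f b)" by (intro eqm_mult eqm_refl eqm_rbar_rbar m)
  also have "\<dots> = map_poly f b * rbar m a" by simp
  finally show ?thesis by (rule eqm_sym)
qed

lemma herm_sym:
  assumes f: "fhom f" and ff: "\<And>x. f (f x) = x" and m: "0 < m"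
  shows "eqm m (map_poly f B1 * rbar m A1 + map_poly f B2 * rbar m A2)
     (rbar m (map_poly f (map_poly f A1 * rbar m B1 + map_poly f A2 * rbar m B2)))"
  by (simp add: map_poly_add_h[OF f] rbar_add[OF m] eqm_add herm_single[OF f ff m])

lemma zero_rbar_map:
  assumes f: "fhom f" and m: "0 < m" and z: "P mod xm1 m = 0"
  shows "rbar m (map_poly f P) = 0"
proof -
  have "map_poly f P mod xm1 m = 0" using map_poly_mod[OF f m, of P] z by simp
  hence "rbar m (map_poly f P mod xm1 m) = 0" by (simp add: rbar_zero)
  thus ?thesis by (simp add: rbar_mod)
qed

lemma herm_gen:
  assumes f: "fhom f" and ff: "\<And>x. f (f x) = x" and m: "0 < m"
    and g1: "lead_coeff g1 = 1" "g1 dvd xm1 m" and g2: "lead_coeff g2 = 1" "g2 dvd xm1 m"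
  shows "self_orth (2 * m) (gform f) (qc_code m g1 (v1 * g1) (v2 * g2) g2) \<longleftrightarrow>
          rdvd m (map_poly f (xm1 m div g1)) (rbar m g1 * (1 + map_poly f v1 * rbar m v1)) \<and>
          rdvd m (map_poly f (xm1 m div g1)) (rbar m g2 * (rbar m v2 + map_poly f v1)) \<and>
          rdvd m (map_poly f (xm1 m div g2)) (rbar m g2 * (map_poly f v2 * rbar m v2 + 1))"
proof -
  let ?T = "map_poly f"
  define PP where "PP A1 A2 B1 B2 = ?T A1 * rbar m B1 + ?T A2 * rbar m B2" for A1 A2 B1 B2
  have G: "self_orth (2 * m) (gform f) (qc_code m g1 (v1 * g1) (v2 * g2) g2) \<longleftrightarrow>
    (PP g1 (v1 * g1) g1 (v1 * g1) mod xm1 m = 0 \<and> PP g1 (v1 * g1) (v2 * g2) g2 mod xm1 m = 0 \<and>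
     PP (v2 * g2) g2 g1 (v1 * g1) mod xm1 m = 0 \<and> PP (v2 * g2) g2 (v2 * g2) g2 mod xm1 m = 0)"
    by (rule gen[OF m, where T = "?T"]) (simp_all add: PP_def gform_hB[OF f m] herm_hexp[OF f m] fhomD[OF f])
  have GH: "xm1 m = ?T g * ?T (xm1 m div g)" if "g dvd xm1 m" for g
    by (metis that dvd_mult_div_cancel map_poly_mult_h[OF f] map_poly_xm1[OF f])
  have Gnz: "?T g \<noteq> 0" if "lead_coeff g = 1" for g
  proof -
    have "coeff (?T g) (degree g) = 1" using that by (simp add: coeff_map_poly fhomD[OF f])
    thus ?thesis by auto
  qed
  have e11: "eqm m (PP g1 (v1 * g1) g1 (v1 * g1)) (?T g1 * (rbar m g1 * (1 + ?T v1 * rbar m v1)))"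
  proof -
    have "eqm m (PP g1 (v1 * g1) g1 (v1 * g1)) (?T g1 * rbar m g1 + ?T (v1 * g1) * (rbar m v1 * rbar m g1))"
      unfolding PP_def by (intro eqm_add eqm_mult eqm_refl eqm_rbar_mult m)
    also have "\<dots> = ?T g1 * (rbar m g1 * (1 + ?T v1 * rbar m v1))"
      by (simp add: map_poly_mult_h[OF f] algebra_simps)
    finally show ?thesis .
  qed
  have e12: "eqm m (PP g1 (v1 * g1) (v2 * g2) g2) (?T g1 * (rbar m g2 * (rbar m v2 + ?T v1)))"
  proof -
    have "eqm m (PP g1 (v1 * g1) (v2 * g2) g2) (?T g1 * (rbar m v2 * rbar m g2) + ?T (v1 * g1) * rbar m g2)"
      unfolding PP_def by (intro eqm_add eqm_mult eqm_refl eqm_rbar_mult m)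
    also have "\<dots> = ?T g1 * (rbar m g2 * (rbar m v2 + ?T v1))"
      by (simp add: map_poly_mult_h[OF f] algebra_simps)
    finally show ?thesis .
  qed
  have e22: "eqm m (PP (v2 * g2) g2 (v2 * g2) g2) (?T g2 * (rbar m g2 * (?T v2 * rbar m v2 + 1)))"
  proof -
    have "eqm m (PP (v2 * g2) g2 (v2 * g2) g2) (?T (v2 * g2) * (rbar m v2 * rbar m g2) + ?T g2 * rbar m g2)"
      unfolding PP_def by (intro eqm_add eqm_mult eqm_refl eqm_rbar_mult m)
    also have "\<dots> = ?T g2 * (rbar m g2 * (?T v2 * rbar m v2 + 1))"
      by (simp add: map_poly_mult_h[OF f] algebra_simps)
    finally show ?thesis .
  qed
  have e21: "PP g1 (v1 * g1) (v2 * g2) g2 mod xm1 m = 0 \<Longrightarrow> PP (v2 * g2) g2 g1 (v1 * g1) mod xm1 m = 0"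
  proof -
    assume z: "PP g1 (v1 * g1) (v2 * g2) g2 mod xm1 m = 0"
    have "eqm m (PP (v2 * g2) g2 g1 (v1 * g1)) (rbar m (?T (PP g1 (v1 * g1) (v2 * g2) g2)))"
      unfolding PP_def by (rule herm_sym[OF f ff m])
    also have "rbar m (?T (PP g1 (v1 * g1) (v2 * g2) g2)) = 0" by (rule zero_rbar_map[OF f m z])
    finally show ?thesis by (simp add: eqm_zero_iff)
  qed
  show ?thesis
    unfolding G
    using divl[OF m GH[OF g1(2)] Gnz[OF g1(1)] e11] divl[OF m GH[OF g1(2)] Gnz[OF g1(1)] e12]
      divl[OF m GH[OF g2(2)] Gnz[OF g2(1)] e22] e21
    by auto
qed



lemma id_single: "0 < m \<Longrightarrow> eqm m (b * rbar m a) (rbar m (a * rbar m b))"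
  using herm_single[OF fhom_id, of m b a] by simp

lemma sympl_hexp:
  assumes m: "0 < m"
  shows "((r1*g11 + r2*g21) * rbar m (s1*g12 + s2*g22) - (r1*g12 + r2*g22) * rbar m (s1*g11 + s2*g21)) mod xm1 m
     = (r1 * rbar m s1 * (g11 * rbar m g12 - g12 * rbar m g11)
        + r1 * rbar m s2 * (g11 * rbar m g22 - g12 * rbar m g21)
        + r2 * rbar m s1 * (g21 * rbar m g12 - g22 * rbar m g11)
        + r2 * rbar m s2 * (g21 * rbar m g22 - g22 * rbar m g21)) mod xm1 m"
proof -
  have "eqm m ((r1*g11 + r2*g21) * rbar m (s1*g12 + s2*g22) - (r1*g12 + r2*g22) * rbar m (s1*g11 + s2*g21))
     ((r1*g11 + r2*g21) * (rbar m s1 * rbar m g12 + rbar m s2 * rbar m g22)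
      - (r1*g12 + r2*g22) * (rbar m s1 * rbar m g11 + rbar m s2 * rbar m g21))"
    by (intro eqm_diff eqm_mult eqm_refl eqm_rbar_lin m)
  also have "\<dots> = r1 * rbar m s1 * (g11 * rbar m g12 - g12 * rbar m g11)
        + r1 * rbar m s2 * (g11 * rbar m g22 - g12 * rbar m g21)
        + r2 * rbar m s1 * (g21 * rbar m g12 - g22 * rbar m g11)
        + r2 * rbar m s2 * (g21 * rbar m g22 - g22 * rbar m g21)"
    by (simp add: algebra_simps)
  finally show ?thesis by (simp add: eqm_mod_iff)
qed

lemma sympl_gen:
  assumes m: "0 < m"
    and g1: "lead_coeff g1 = 1" "g1 dvd xm1 m" and g2: "lead_coeff g2 = 1" "g2 dvd xm1 m"
  shows "self_orth (2 * m) (sympl_ip m) (qc_code m g1 (v1 * g1) (v2 * g2) g2) \<longleftrightarrow>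
          rdvd m (xm1 m div g1) (rbar m g1 * (rbar m v1 - v1)) \<and>
          rdvd m (xm1 m div g1) (rbar m g2 * (1 - rbar m v2 * v1)) \<and>
          rdvd m (xm1 m div g2) (rbar m g2 * (v2 - rbar m v2))"
proof -
  define PP where "PP A1 A2 B1 B2 = A1 * rbar m B2 - A2 * rbar m B1" for A1 A2 B1 B2 :: "'a poly"
  have G: "self_orth (2 * m) (sympl_ip m) (qc_code m g1 (v1 * g1) (v2 * g2) g2) \<longleftrightarrow>
    (PP g1 (v1 * g1) g1 (v1 * g1) mod xm1 m = 0 \<and> PP g1 (v1 * g1) (v2 * g2) g2 mod xm1 m = 0 \<and>
     PP (v2 * g2) g2 g1 (v1 * g1) mod xm1 m = 0 \<and> PP (v2 * g2) g2 (v2 * g2) g2 mod xm1 m = 0)"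
    by (rule gen[OF m, where T = "\<lambda>r. r"]) (simp_all add: PP_def sympl_hB[OF m] sympl_hexp[OF m])
  have GH: "xm1 m = g * (xm1 m div g)" if "g dvd xm1 m" for g :: "'a poly"
    by (metis that dvd_mult_div_cancel)
  have Gnz: "g \<noteq> 0" if "lead_coeff g = 1" for g :: "'a poly"
    using that by auto
  have e11: "eqm m (PP g1 (v1 * g1) g1 (v1 * g1)) (g1 * (rbar m g1 * (rbar m v1 - v1)))"
  proof -
    have "eqm m (PP g1 (v1 * g1) g1 (v1 * g1)) (g1 * (rbar m v1 * rbar m g1) - (v1 * g1) * rbar m g1)"
      unfolding PP_def by (intro eqm_diff eqm_mult eqm_refl eqm_rbar_mult m)
    also have "\<dots> = g1 * (rbar m g1 * (rbar m v1 - v1))"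
      by (simp add: algebra_simps)
    finally show ?thesis .
  qed
  have e12: "eqm m (PP g1 (v1 * g1) (v2 * g2) g2) (g1 * (rbar m g2 * (1 - rbar m v2 * v1)))"
  proof -
    have "eqm m (PP g1 (v1 * g1) (v2 * g2) g2) (g1 * rbar m g2 - (v1 * g1) * (rbar m v2 * rbar m g2))"
      unfolding PP_def by (intro eqm_diff eqm_mult eqm_refl eqm_rbar_mult m)
    also have "\<dots> = g1 * (rbar m g2 * (1 - rbar m v2 * v1))"
      by (simp add: algebra_simps)
    finally show ?thesis .
  qed
  have e22: "eqm m (PP (v2 * g2) g2 (v2 * g2) g2) (g2 * (rbar m g2 * (v2 - rbar m v2)))"
  proof -
    have "eqm m (PP (v2 * g2) g2 (v2 * g2) g2) ((v2 * g2) * rbar m g2 - g2 * (rbar m v2 * rbar m g2))"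
      unfolding PP_def by (intro eqm_diff eqm_mult eqm_refl eqm_rbar_mult m)
    also have "\<dots> = g2 * (rbar m g2 * (v2 - rbar m v2))"
      by (simp add: algebra_simps)
    finally show ?thesis .
  qed
  have e21: "PP g1 (v1 * g1) (v2 * g2) g2 mod xm1 m = 0 \<Longrightarrow> PP (v2 * g2) g2 g1 (v1 * g1) mod xm1 m = 0"
  proof -
    assume z: "PP g1 (v1 * g1) (v2 * g2) g2 mod xm1 m = 0"
    have "eqm m (PP (v2 * g2) g2 g1 (v1 * g1))
        (rbar m ((v1 * g1) * rbar m (v2 * g2)) - rbar m (g1 * rbar m g2))"
      unfolding PP_def by (intro eqm_diff id_single m)
    also have "\<dots> = - rbar m (PP g1 (v1 * g1) (v2 * g2) g2)"
      unfolding PP_def by (simp add: rbar_diff[OF m])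
    also have "rbar m (PP g1 (v1 * g1) (v2 * g2) g2) = 0"
      by (metis z rbar_mod rbar_zero)
    finally show ?thesis by (simp add: eqm_zero_iff)
  qed
  show ?thesis
    unfolding G
    using divl[OF m GH[OF g1(2)] Gnz[OF g1(1)] e11] divl[OF m GH[OF g1(2)] Gnz[OF g1(1)] e12]
      divl[OF m GH[OF g2(2)] Gnz[OF g2(1)] e22] e21
    by auto
qed



lemma euclid_gform: "euclid_ip = gform (\<lambda>x. x)"
  by (intro ext) (simp add: euclid_ip_def gform_def)

lemma herm_gform: "herm_ip q = gform (\<lambda>x. x ^ q)"
  by (intro ext) (simp add: herm_ip_def gform_def)

lemma frob_fhom:
  assumes cq: "card (UNIV :: 'b::{finite,field} set) = q ^ 2"
  shows "fhom (\<lambda>x::'b. x ^ q)" and "\<And>x::'b. (x ^ q) ^ q = x"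
proof -
  have fin: "finite (UNIV :: 'b set)" by simp
  have q0: "q \<noteq> 0" using cq finite_UNIV_card_ge_0[OF fin] by (cases q) auto
  show "fhom (\<lambda>x::'b. x ^ q)"
    unfolding fhom_def using q0 ff_frob[OF fin cq] by (simp add: power_mult_distrib)
  show "(x ^ q) ^ q = x" for x :: 'b
  proof -
    have "(x ^ q) ^ q = x ^ card (UNIV :: 'b set)" by (simp add: cq power_mult[symmetric] power2_eq_square)
    thus ?thesis using ff_power_card[OF fin] by simp
  qed
qed

theorem mainTheorem4:
  fixes m :: nat
  assumes "0 < m"
  shows
  "(\<forall>(g1::'a::{finite,field_gcd} poly) g2 v1 v2.
      lead_coeff g1 = 1 \<and> g1 dvd xm1 m \<and> lead_coeff g2 = 1 \<and> g2 dvd xm1 m \<and>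
      degree v1 < m \<and> degree v2 < m \<and> gcd (v1 * v2 - 1) (xm1 m) = 1 \<longrightarrow>
      (let h1 = xm1 m div g1; h2 = xm1 m div g2 in
        self_orth (2 * m) euclid_ip (qc_code m g1 (v1 * g1) (v2 * g2) g2) \<longleftrightarrow>
          rdvd m h1 (rbar m g1 * (1 + v1 * rbar m v1)) \<and>
          rdvd m h1 (rbar m g2 * (rbar m v2 + v1)) \<and>
          rdvd m h2 (rbar m g2 * (1 + v2 * rbar m v2))))
 \<and> (\<forall>(q::nat) (g1::'b::{finite,field_gcd} poly) g2 v1 v2.
      card (UNIV :: 'b set) = q ^ 2 \<and>
      lead_coeff g1 = 1 \<and> g1 dvd xm1 m \<and> lead_coeff g2 = 1 \<and> g2 dvd xm1 m \<and>
      degree v1 < m \<and> degree v2 < m \<and> gcd (v1 * v2 - 1) (xm1 m) = 1 \<longrightarrow>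
      (let h1 = xm1 m div g1; h2 = xm1 m div g2 in
        self_orth (2 * m) (herm_ip q) (qc_code m g1 (v1 * g1) (v2 * g2) g2) \<longleftrightarrow>
          rdvd m (qpow q h1) (rbar m g1 * (1 + qpow q v1 * rbar m v1)) \<and>
          rdvd m (qpow q h1) (rbar m g2 * (rbar m v2 + qpow q v1)) \<and>
          rdvd m (qpow q h2) (rbar m g2 * (qpow q v2 * rbar m v2 + 1))))
 \<and> (\<forall>(g1::'a::{finite,field_gcd} poly) g2 v1 v2.
      lead_coeff g1 = 1 \<and> g1 dvd xm1 m \<and> lead_coeff g2 = 1 \<and> g2 dvd xm1 m \<and>
      degree v1 < m \<and> degree v2 < m \<and> gcd (v1 * v2 - 1) (xm1 m) = 1 \<longrightarrow>
      (let h1 = xm1 m div g1; h2 = xm1 m div g2 in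
        self_orth (2 * m) (sympl_ip m) (qc_code m g1 (v1 * g1) (v2 * g2) g2) \<longleftrightarrow>
          rdvd m h1 (rbar m g1 * (rbar m v1 - v1)) \<and>
          rdvd m h1 (rbar m g2 * (1 - rbar m v2 * v1)) \<and>
          rdvd m h2 (rbar m g2 * (v2 - rbar m v2))))"
proof (intro conjI allI impI)
  fix g1 g2 v1 v2 :: "'a::{finite,field_gcd} poly"
  assume h: "lead_coeff g1 = 1 \<and> g1 dvd xm1 m \<and> lead_coeff g2 = 1 \<and> g2 dvd xm1 m \<and>
      degree v1 < m \<and> degree v2 < m \<and> gcd (v1 * v2 - 1) (xm1 m) = 1"
  show "let h1 = xm1 m div g1; h2 = xm1 m div g2 in
        self_orth (2 * m) euclid_ip (qc_code m g1 (v1 * g1) (v2 * g2) g2) \<longleftrightarrow>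
          rdvd m h1 (rbar m g1 * (1 + v1 * rbar m v1)) \<and>
          rdvd m h1 (rbar m g2 * (rbar m v2 + v1)) \<and>
          rdvd m h2 (rbar m g2 * (1 + v2 * rbar m v2))"
    using herm_gen[OF fhom_id _ assms, of g1 g2 v1 v2] h
    by (simp add: Let_def euclid_gform add.commute)
next
  fix q :: nat and g1 g2 v1 v2 :: "'b::{finite,field_gcd} poly"
  assume h: "card (UNIV :: 'b set) = q ^ 2 \<and>
      lead_coeff g1 = 1 \<and> g1 dvd xm1 m \<and> lead_coeff g2 = 1 \<and> g2 dvd xm1 m \<and>
      degree v1 < m \<and> degree v2 < m \<and> gcd (v1 * v2 - 1) (xm1 m) = 1"
  hence cq: "card (UNIV :: 'b set) = q ^ 2" by simp
  show "let h1 = xm1 m div g1; h2 = xm1 m div g2 in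
        self_orth (2 * m) (herm_ip q) (qc_code m g1 (v1 * g1) (v2 * g2) g2) \<longleftrightarrow>
          rdvd m (qpow q h1) (rbar m g1 * (1 + qpow q v1 * rbar m v1)) \<and>
          rdvd m (qpow q h1) (rbar m g2 * (rbar m v2 + qpow q v1)) \<and>
          rdvd m (qpow q h2) (rbar m g2 * (qpow q v2 * rbar m v2 + 1))"
    using herm_gen[OF frob_fhom[OF cq] assms, of g1 g2 v1 v2] h
    by (simp add: Let_def herm_gform qpow_def)
next
  fix g1 g2 v1 v2 :: "'a::{finite,field_gcd} poly"
  assume h: "lead_coeff g1 = 1 \<and> g1 dvd xm1 m \<and> lead_coeff g2 = 1 \<and> g2 dvd xm1 m \<and>
      degree v1 < m \<and> degree v2 < m \<and> gcd (v1 * v2 - 1) (xm1 m) = 1"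
  show "let h1 = xm1 m div g1; h2 = xm1 m div g2 in
        self_orth (2 * m) (sympl_ip m) (qc_code m g1 (v1 * g1) (v2 * g2) g2) \<longleftrightarrow>
          rdvd m h1 (rbar m g1 * (rbar m v1 - v1)) \<and>
          rdvd m h1 (rbar m g2 * (1 - rbar m v2 * v1)) \<and>
          rdvd m h2 (rbar m g2 * (v2 - rbar m v2))"
    using sympl_gen[OF assms, of g1 g2 v1 v2] h
    by (simp add: Let_def)
qed

end
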